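(* Let $N_1,N_2,N_3\ge0$ be integers and $\Phi\in P(N_1,N_2,N_3)$. Suppose the kernel of $A(N_1,N_2,N_3)$ has dimension $\nu_A=1$. Then every $f\in D_A$ is an extremal polynomial in the class $Q(N_1,N_2,N_3)$.
   Context: For integers $N_1,N_2,N_3\ge0$, $\sigma(N_1,N_2,N_3)$ is the set of trigonometric polynomials $f(\alpha,\beta,\gamma)=\sum_{|k|\le N_1}\sum_{|\ell|\le N_2}\sum_{|m|\le N_3} q(k,\ell,m)e^{i(k\alpha+\ell\beta+m\gamma)}$ with $f\ge0$ for all real $\alpha,\beta,\gamma$; $Q(N_1,N_2,N_3)$ is the set of $f\in\sigma(N_1,N_2,N_3)$ of the form $f=\sum_{j=1}^r|F_j|^2$ with $F_j=\sum_{0\le k\le N_1,0\le\ell\le N_2,0\le m\le N_3}q_j(k,\ell,m)e^{i(k\alpha+\ell\beta+m\gamma)}$. Let $S=\{(k,\ell,m)\in\mathbb Z^3:0\le k\le N_1,0\le\ell\le N_2,0\le m\le N_3\}$, $\Delta=S-S$. $P(N_1,N_2,N_3)$ is the class of $\Phi:\Delta\to\mathbb C$ with $\sum_{i,j}\xi_i\bar\xi_j\Phi(x_i-x_j)\ge0$ for all $x_i\in S$, $\xi_i\in\mathbb C$. $A(N_1,N_2,N_3)$ is the matrix indexed by $S\times S$ with entry $\Phi(y-x)$ in row $x$, column $y$; $\nu_A$ is the dimension of its (complex) kernel. For a vector $e=(e(x))_{x\in S}$ put $F_e(\alpha,\beta,\gamma)=\sum_{(k,\ell,m)\in S}e(k,\ell,m)e^{i(k\alpha+\ell\beta+m\gamma)}$.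 $D_A$ is the convex hull of the polynomials $|F_e|^2$ with $e\ne0$ in the kernel of $A(N_1,N_2,N_3)$. An element $f$ of a convex cone $U$ is called extremal in $U$ if whenever $f=g+h$ with $g,h\in U$, both $g$ and $h$ are nonnegative multiples of $f$. *)

theory Defs
  imports "HOL-Analysis.Analysis" "HOL-Library.Function_Algebras"
begin

type_synonym idx = "int \<times> int \<times> int"

definition Sset :: "nat \<Rightarrow> nat \<Rightarrow> nat \<Rightarrow> idx set" where
  "Sset N1 N2 N3 = {(k,l,m). 0 \<le> k \<and> k \<le> int N1 \<and> 0 \<le> l \<and> l \<le> int N2 \<and> 0 \<le> m \<and> m \<le> int N3}"

definition Fpoly :: "nat \<Rightarrow> nat \<Rightarrow> nat \<Rightarrow> (idx \<Rightarrow> complex) \<Rightarrow> real \<Rightarrow> real \<Rightarrow> real \<Rightarrow> complex" where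
  "Fpoly N1 N2 N3 e \<alpha> \<beta> \<gamma> =
     (\<Sum>(k,l,m)\<in>Sset N1 N2 N3. e (k,l,m) *
        exp (\<i> * complex_of_real (of_int k * \<alpha> + of_int l * \<beta> + of_int m * \<gamma>)))"

definition Qclass :: "nat \<Rightarrow> nat \<Rightarrow> nat \<Rightarrow> (real \<Rightarrow> real \<Rightarrow> real \<Rightarrow> real) set" where
  "Qclass N1 N2 N3 = {f. \<exists>(r::nat) (q :: nat \<Rightarrow> idx \<Rightarrow> complex).
      f = (\<lambda>\<alpha> \<beta> \<gamma>. \<Sum>j<r. (cmod (Fpoly N1 N2 N3 (q j) \<alpha> \<beta> \<gamma>))\<^sup>2)}"

text \<open>The class P(N1,N2,N3) of positive definite functions on Delta = S - S
  (only values on Delta are relevant).\<close>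
definition Pclass :: "nat \<Rightarrow> nat \<Rightarrow> nat \<Rightarrow> (idx \<Rightarrow> complex) set" where
  "Pclass N1 N2 N3 = {\<Phi>. \<forall>(n::nat) (x :: nat \<Rightarrow> idx) (\<xi> :: nat \<Rightarrow> complex).
      (\<forall>i<n. x i \<in> Sset N1 N2 N3) \<longrightarrow>
      (let s = (\<Sum>i<n. \<Sum>j<n. \<xi> i * cnj (\<xi> j) * \<Phi> (x i - x j)) in Im s = 0 \<and> Re s \<ge> 0)}"

text \<open>Kernel of the matrix A with entry Phi(y - x) in row x, column y;
  vectors are functions on idx vanishing outside S.\<close>
definition kerA :: "nat \<Rightarrow> nat \<Rightarrow> nat \<Rightarrow> (idx \<Rightarrow> complex) \<Rightarrow> (idx \<Rightarrow> complex) set" where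
  "kerA N1 N2 N3 \<Phi> = {e. (\<forall>x. x \<notin> Sset N1 N2 N3 \<longrightarrow> e x = 0) \<and>
      (\<forall>x\<in>Sset N1 N2 N3. (\<Sum>y\<in>Sset N1 N2 N3. \<Phi> (y - x) * e y) = 0)}"

definition nuA :: "nat \<Rightarrow> nat \<Rightarrow> nat \<Rightarrow> (idx \<Rightarrow> complex) \<Rightarrow> nat" where
  "nuA N1 N2 N3 \<Phi> = vector_space.dim (\<lambda>(c::complex) (e::idx \<Rightarrow> complex). (\<lambda>x. c * e x)) (kerA N1 N2 N3 \<Phi>)"

text \<open>D_A: convex hull of |F_e|^2 for nonzero e in the kernel (written out explicitly).\<close>
definition DA :: "nat \<Rightarrow> nat \<Rightarrow> nat \<Rightarrow> (idx \<Rightarrow> complex) \<Rightarrow> (real \<Rightarrow> real \<Rightarrow> real \<Rightarrow> real) set" where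
  "DA N1 N2 N3 \<Phi> = {f. \<exists>(n::nat) (c :: nat \<Rightarrow> real) (e :: nat \<Rightarrow> idx \<Rightarrow> complex).
      0 < n \<and> (\<forall>i<n. 0 \<le> c i) \<and> (\<Sum>i<n. c i) = 1 \<and>
      (\<forall>i<n. e i \<in> kerA N1 N2 N3 \<Phi> \<and> e i \<noteq> 0) \<and>
      f = (\<lambda>\<alpha> \<beta> \<gamma>. \<Sum>i<n. c i * (cmod (Fpoly N1 N2 N3 (e i) \<alpha> \<beta> \<gamma>))\<^sup>2)}"

definition extremal :: "(real \<Rightarrow> real \<Rightarrow> real \<Rightarrow> real) set \<Rightarrow> (real \<Rightarrow> real \<Rightarrow> real \<Rightarrow> real) \<Rightarrow> bool" where
  "extremal U f \<longleftrightarrow> f \<in> U \<and>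
     (\<forall>g h. g \<in> U \<longrightarrow> h \<in> U \<longrightarrow> f = (\<lambda>\<alpha> \<beta> \<gamma>. g \<alpha> \<beta> \<gamma> + h \<alpha> \<beta> \<gamma>) \<longrightarrow>
        (\<exists>a\<ge>0. g = (\<lambda>\<alpha> \<beta> \<gamma>. a * f \<alpha> \<beta> \<gamma>)) \<and> (\<exists>b\<ge>0. h = (\<lambda>\<alpha> \<beta> \<gamma>. b * f \<alpha> \<beta> \<gamma>)))"

end

theory Submission
  imports Defs
begin

lemma geo1:
  fixes k :: int and M :: nat
  assumes "\<bar>k\<bar> < int M"
  shows "(\<Sum>t<M. cis (of_int k * (2*pi*real t/real M))) = (if k = 0 then of_nat M else 0)"
proof (cases "k = 0")
  case True then show ?thesis by simp
next
  case False
  define z where "z = cis (2 * pi * of_int k/real M)"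
  have M0: "M > 0" using assms by linarith
  have zt: "cis (of_int k * (2*pi*real t/real M)) = z ^ t" for t
    unfolding z_def Complex.DeMoivre by (rule arg_cong[where f=cis]) (simp add: field_simps)
  have "z ^ M = cis (2 * pi * of_int k)"
    unfolding z_def Complex.DeMoivre using M0 by (rule_tac arg_cong[where f=cis]) (simp add: field_simps)
  then have zM: "z ^ M = 1" by simp
  have z1: "z \<noteq> 1"
  proof
    assume "z = 1"
    then have "exp (\<i> * complex_of_real (2 * pi * of_int k/real M)) = 1" by (simp add: z_def cis_conv_exp)
    then obtain n :: int where n: "2 * pi * of_int k/real M = 2 * pi * of_int n"
      by (auto simp: exp_eq_1 elim!: Ints_cases)
    then have "real_of_int k = real M * of_int n" using M0 by (simp add: field_simps)
    then have kn: "k = int M * n" by (metis of_int_eq_iff of_int_mult of_int_of_nat_eq)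
    show False
    proof (cases "n = 0")
      case True then show False using kn False by simp
    next
      case n0: False
      have "\<bar>k\<bar> = int M * \<bar>n\<bar>" using kn by (simp add: abs_mult)
      also have "\<dots> \<ge> int M" using n0 by (simp add: mult_le_cancel_left1, linarith)
      finally show False using assms by simp
    qed
  qed
  have "(\<Sum>t<M. cis (of_int k * (2*pi*real t/real M))) = (\<Sum>t<M. z ^ t)"
    using zt by (rule sum.cong[OF refl])
  also have "\<dots> = 0" by (simp add: geometric_sum[OF z1] zM)
  finally show ?thesis using False by simp
qed

definition ph :: "idx \<Rightarrow> real \<Rightarrow> real \<Rightarrow> real \<Rightarrow> real" where
  "ph v a b c = of_int (fst v) * a + of_int (fst (snd v)) * b + of_int (snd (snd v)) * c"
definition ang :: "nat \<Rightarrow> nat \<Rightarrow> real" where "ang M t = 2*pi*real t/real M"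
definition TT :: "nat \<Rightarrow> (nat \<times> nat \<times> nat) set" where "TT M = {..<M} \<times> {..<M} \<times> {..<M}"

lemma ph_diff: "ph (x - y) a b c = ph x a b c - ph y a b c"
  by (simp add: ph_def algebra_simps)

lemma prod3_sum: "(\<Sum>(t1,t2,t3)\<in>A \<times> B \<times> C. (f t1 * g t2 * h t3 :: complex)) = sum f A * sum g B * sum h C"
proof -
  have "sum f A * sum g B * sum h C = (\<Sum>x\<in>A. \<Sum>y\<in>B. \<Sum>z\<in>C. f x * g y * h z)"
  proof -
    have 1: "sum f A * sum g B * sum h C = sum f A * (sum g B * sum h C)" by (simp only: mult.assoc)
    have 2: "sum g B * sum h C = (\<Sum>y\<in>B. \<Sum>z\<in>C. g y * h z)" by (rule sum_product)
    have 3: "sum f A * (\<Sum>y\<in>B. \<Sum>z\<in>C. g y * h z) = (\<Sum>x\<in>A. \<Sum>y\<in>B. f x * (\<Sum>z\<in>C. g y * h z))" by (rule sum_product)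
    have 4: "(\<Sum>x\<in>A. \<Sum>y\<in>B. f x * (\<Sum>z\<in>C. g y * h z)) = (\<Sum>x\<in>A. \<Sum>y\<in>B. \<Sum>z\<in>C. f x * g y * h z)"
      by (simp only: sum_distrib_left mult.assoc)
    show ?thesis using 1 2 3 4 by simp
  qed
  also have "\<dots> = (\<Sum>(t1,t2,t3)\<in>A \<times> B \<times> C. f t1 * g t2 * h t3)"
    by (simp add: sum.cartesian_product)
  finally show ?thesis by simp
qed

lemma orth3:
  assumes "\<bar>fst w\<bar> < int M" "\<bar>fst (snd w)\<bar> < int M" "\<bar>snd (snd w)\<bar> < int M"
  shows "(\<Sum>(t1,t2,t3)\<in>TT M. cis (ph w (ang M t1) (ang M t2) (ang M t3))) = (if w = 0 then of_nat M ^ 3 else 0)"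
proof -
  obtain a b c where w: "w = (a,b,c)" by (cases w) auto
  have "(\<Sum>(t1,t2,t3)\<in>TT M. cis (ph w (ang M t1) (ang M t2) (ang M t3)))
     = (\<Sum>(t1,t2,t3)\<in>TT M. cis (of_int a * (2*pi*real t1/real M)) * cis (of_int b * (2*pi*real t2/real M)) * cis (of_int c * (2*pi*real t3/real M)))"
    by (rule sum.cong[OF refl]) (auto simp: w ph_def ang_def cis_mult)
  also have "\<dots> = (\<Sum>t<M. cis (of_int a * (2*pi*real t/real M))) * (\<Sum>t<M. cis (of_int b * (2*pi*real t/real M))) * (\<Sum>t<M. cis (of_int c * (2*pi*real t/real M)))"
    unfolding TT_def by (rule prod3_sum)
  also have "\<dots> = (if w = 0 then of_nat M ^ 3 else 0)"
    using geo1[of a M] geo1[of b M] geo1[of c M] assms by (simp only: w fst_conv snd_conv) (simp add: zero_prod_def power3_eq_cube)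
  finally show ?thesis .
qed

lemma Sset_eq: "Sset N1 N2 N3 = {0..int N1} \<times> {0..int N2} \<times> {0..int N3}"
  by (auto simp: Sset_def)

lemma finite_Sset[simp]: "finite (Sset N1 N2 N3)"
  by (simp add: Sset_eq)

lemma Fpoly_alt: "Fpoly N1 N2 N3 e a b c = (\<Sum>v\<in>Sset N1 N2 N3. e v * cis (ph v a b c))"
  unfolding Fpoly_def by (rule sum.cong[OF refl]) (auto simp: cis_conv_exp ph_def)

lemma normsq:
  "complex_of_real ((cmod (Fpoly N1 N2 N3 u a b c))\<^sup>2) =
    (\<Sum>x\<in>Sset N1 N2 N3. \<Sum>y\<in>Sset N1 N2 N3. u x * cnj (u y) * cis (ph (x - y) a b c))"
  unfolding complex_norm_square Fpoly_alt
  by (simp add: sum_product cis_cnj cis_mult ph_diff mult_ac)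

definition Mof :: "nat \<Rightarrow> nat \<Rightarrow> nat \<Rightarrow> nat" where "Mof N1 N2 N3 = 2*(N1+N2+N3)+1"
definition Dset :: "nat \<Rightarrow> nat \<Rightarrow> nat \<Rightarrow> idx set" where
  "Dset N1 N2 N3 = {-int N1..int N1} \<times> {-int N2..int N2} \<times> {-int N3..int N3}"
definition Kf :: "nat \<Rightarrow> nat \<Rightarrow> nat \<Rightarrow> (idx \<Rightarrow> complex) \<Rightarrow> real \<Rightarrow> real \<Rightarrow> real \<Rightarrow> complex" where
  "Kf N1 N2 N3 \<Phi> a b c = (\<Sum>d\<in>Dset N1 N2 N3. \<Phi> d * cis (- ph d a b c))"
definition th1 :: "nat \<Rightarrow> nat \<times> nat \<times> nat \<Rightarrow> real" where "th1 M t = ang M (fst t)"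
definition th2 :: "nat \<Rightarrow> nat \<times> nat \<times> nat \<Rightarrow> real" where "th2 M t = ang M (fst (snd t))"
definition th3 :: "nat \<Rightarrow> nat \<times> nat \<times> nat \<Rightarrow> real" where "th3 M t = ang M (snd (snd t))"
definition Lf :: "nat \<Rightarrow> nat \<Rightarrow> nat \<Rightarrow> (idx \<Rightarrow> complex) \<Rightarrow> (real \<Rightarrow> real \<Rightarrow> real \<Rightarrow> real) \<Rightarrow> complex" where
  "Lf N1 N2 N3 \<Phi> p = (let M = Mof N1 N2 N3 in
     (\<Sum>t\<in>TT M. complex_of_real (p (th1 M t) (th2 M t) (th3 M t)) * Kf N1 N2 N3 \<Phi> (th1 M t) (th2 M t) (th3 M t)))"
definition Qf :: "nat \<Rightarrow> nat \<Rightarrow> nat \<Rightarrow> (idx \<Rightarrow> complex) \<Rightarrow> (idx \<Rightarrow> complex) \<Rightarrow> complex" where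
  "Qf N1 N2 N3 \<Phi> u = (\<Sum>x\<in>Sset N1 N2 N3. \<Sum>y\<in>Sset N1 N2 N3. u x * cnj (u y) * \<Phi> (x - y))"

lemma finite_Dset[simp]: "finite (Dset N1 N2 N3)" by (simp add: Dset_def)
lemma finite_TT[simp]: "finite (TT M)" by (simp add: TT_def)

lemma orth3':
  assumes "\<bar>fst w\<bar> < int M" "\<bar>fst (snd w)\<bar> < int M" "\<bar>snd (snd w)\<bar> < int M"
  shows "(\<Sum>t\<in>TT M. cis (ph w (th1 M t) (th2 M t) (th3 M t))) = (if w = 0 then of_nat M ^ 3 else 0)"
  using orth3[OF assms] by (simp add: split_beta th1_def th2_def th3_def)

lemma swap4: "(\<Sum>t\<in>T. \<Sum>x\<in>S. \<Sum>y\<in>S'. \<Sum>d\<in>D. F t x y d) = (\<Sum>x\<in>S. \<Sum>y\<in>S'. \<Sum>d\<in>D. \<Sum>t\<in>T. F t x y d)"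
  by (subst sum.swap) (rule sum.cong[OF refl], subst sum.swap, rule sum.cong[OF refl], rule sum.swap)

lemma pt: "(\<Sum>x\<in>S. \<Sum>y\<in>S'. u x * cnj (u y) * cis (ph (x - y) a b c)) * (\<Sum>d\<in>D. \<Phi> d * cis (- ph d a b c))
   = (\<Sum>x\<in>S. \<Sum>y\<in>S'. \<Sum>d\<in>D. (u x * cnj (u y) * \<Phi> d) * cis (ph (x - y - d) a b c))"
  unfolding sum_distrib_right unfolding sum_distrib_left
proof (intro sum.cong refl)
  fix x y d
  have "cis (ph (x - y) a b c) * cis (- ph d a b c) = cis (ph (x - y - d) a b c)"
    by (simp add: cis_mult ph_diff)
  then show "u x * cnj (u y) * cis (ph (x - y) a b c) * (\<Phi> d * cis (- ph d a b c)) =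
    u x * cnj (u y) * \<Phi> d * cis (ph (x - y - d) a b c)"
    by (metis (no_types, lifting) mult.assoc mult.left_commute)
qed

lemma L_sq: "Lf N1 N2 N3 \<Phi> (\<lambda>a b c. (cmod (Fpoly N1 N2 N3 u a b c))\<^sup>2) = of_nat (Mof N1 N2 N3) ^ 3 * Qf N1 N2 N3 \<Phi> u"
proof -
  define M where "M = Mof N1 N2 N3"
  define S where "S = Sset N1 N2 N3"
  define D where "D = Dset N1 N2 N3"
  have "Lf N1 N2 N3 \<Phi> (\<lambda>a b c. (cmod (Fpoly N1 N2 N3 u a b c))\<^sup>2) =
     (\<Sum>t\<in>TT M. \<Sum>x\<in>S. \<Sum>y\<in>S. \<Sum>d\<in>D. (u x * cnj (u y) * \<Phi> d) * cis (ph (x - y - d) (th1 M t) (th2 M t) (th3 M t)))"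
    unfolding Lf_def Let_def normsq Kf_def M_def[symmetric] S_def[symmetric] D_def[symmetric] pt ..
  also have "\<dots> = (\<Sum>x\<in>S. \<Sum>y\<in>S. \<Sum>d\<in>D. (u x * cnj (u y) * \<Phi> d) * (\<Sum>t\<in>TT M. cis (ph (x - y - d) (th1 M t) (th2 M t) (th3 M t))))"
    by (rule trans[OF swap4]) (simp only: sum_distrib_left)
  also have "\<dots> = (\<Sum>x\<in>S. \<Sum>y\<in>S. \<Sum>d\<in>D. (u x * cnj (u y) * \<Phi> d) * (if x - y = d then of_nat M ^ 3 else 0))"
  proof (intro sum.cong refl)
    fix x y d assume "x \<in> S" "y \<in> S" "d \<in> D"
    then have "\<bar>fst (x - y - d)\<bar> < int M" "\<bar>fst (snd (x - y - d))\<bar> < int M" "\<bar>snd (snd (x - y - d))\<bar> < int M"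
      unfolding S_def D_def M_def Mof_def by (auto simp: Sset_eq Dset_def mem_Times_iff)
    then show "(u x * cnj (u y) * \<Phi> d) * (\<Sum>t\<in>TT M. cis (ph (x - y - d) (th1 M t) (th2 M t) (th3 M t))) =
       (u x * cnj (u y) * \<Phi> d) * (if x - y = d then of_nat M ^ 3 else 0)"
      by (simp add: orth3')
  qed
  also have "\<dots> = (\<Sum>x\<in>S. \<Sum>y\<in>S. (u x * cnj (u y) * \<Phi> (x - y)) * of_nat M ^ 3)"
  proof (intro sum.cong refl)
    fix x y assume "x \<in> S" "y \<in> S"
    then have "x - y \<in> D" by (auto simp: S_def D_def Sset_def Dset_def)
    then show "(\<Sum>d\<in>D. (u x * cnj (u y) * \<Phi> d) * (if x - y = d then of_nat M ^ 3 else 0)) = (u x * cnj (u y) * \<Phi> (x - y)) * of_nat M ^ 3"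
      by (simp add: D_def sum.delta sum.delta' if_distrib[of "\<lambda>z. u x * cnj (u y) * \<Phi> _ * z"] cong: if_cong)
  qed
  also have "\<dots> = of_nat M ^ 3 * Qf N1 N2 N3 \<Phi> u"
    unfolding Qf_def S_def sum_distrib_right[symmetric] by (rule mult.commute)
  finally show ?thesis by (simp add: M_def)
qed

lemma Lf_add: "Lf N1 N2 N3 \<Phi> (\<lambda>a b c. g a b c + h a b c) = Lf N1 N2 N3 \<Phi> g + Lf N1 N2 N3 \<Phi> h"
  by (simp add: Lf_def Let_def sum.distrib algebra_simps)

lemma Lf_sum: "Lf N1 N2 N3 \<Phi> (\<lambda>a b c. \<Sum>j<r. p j a b c) = (\<Sum>j<r. Lf N1 N2 N3 \<Phi> (p j))"
  unfolding Lf_def Let_def of_real_sum sum_distrib_right by (rule sum.swap)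

lemma Lf_scale: "Lf N1 N2 N3 \<Phi> (\<lambda>a b c. k * p a b c) = of_real k * Lf N1 N2 N3 \<Phi> p"
  by (simp add: Lf_def Let_def sum_distrib_left mult.assoc)

definition Bf :: "nat \<Rightarrow> nat \<Rightarrow> nat \<Rightarrow> (idx \<Rightarrow> complex) \<Rightarrow> (idx \<Rightarrow> complex) \<Rightarrow> (idx \<Rightarrow> complex) \<Rightarrow> complex" where
  "Bf N1 N2 N3 \<Phi> u v = (\<Sum>x\<in>Sset N1 N2 N3. \<Sum>y\<in>Sset N1 N2 N3. u x * cnj (v y) * \<Phi> (x - y))"

lemma Qf_expand: "Qf N1 N2 N3 \<Phi> (\<lambda>z. u z + s * v z) =
   Qf N1 N2 N3 \<Phi> u + cnj s * Bf N1 N2 N3 \<Phi> u v + s * Bf N1 N2 N3 \<Phi> v u + s * cnj s * Qf N1 N2 N3 \<Phi> v"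
  by (simp add: Qf_def Bf_def sum.distrib sum_distrib_left algebra_simps)

lemma Pclass_Qf:
  assumes "\<Phi> \<in> Pclass N1 N2 N3"
  shows "Im (Qf N1 N2 N3 \<Phi> u) = 0 \<and> Re (Qf N1 N2 N3 \<Phi> u) \<ge> 0"
proof -
  define S where "S = Sset N1 N2 N3"
  obtain h where h: "bij_betw h {0..<card S} S" using ex_bij_betw_nat_finite[of S] by (auto simp: S_def)
  define n where "n = card S"
  have hS: "\<forall>i<n. h i \<in> S" using h by (auto simp: n_def bij_betw_def)
  have "(\<Sum>i<n. \<Sum>j<n. (u \<circ> h) i * cnj ((u \<circ> h) j) * \<Phi> (h i - h j)) = Qf N1 N2 N3 \<Phi> u"
  proof -
    have "(\<Sum>i<n. \<Sum>j<n. (u \<circ> h) i * cnj ((u \<circ> h) j) * \<Phi> (h i - h j)) = (\<Sum>i\<in>{0..<card S}. \<Sum>j\<in>{0..<card S}. u (h i) * cnj (u (h j)) * \<Phi> (h i - h j))"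
      by (simp add: n_def lessThan_atLeast0)
    also have "\<dots> = (\<Sum>x\<in>S. \<Sum>j\<in>{0..<card S}. u x * cnj (u (h j)) * \<Phi> (x - h j))"
      using sum.reindex_bij_betw[OF h, of "\<lambda>x. \<Sum>j\<in>{0..<card S}. u x * cnj (u (h j)) * \<Phi> (x - h j)"] by simp
    also have "\<dots> = (\<Sum>x\<in>S. \<Sum>y\<in>S. u x * cnj (u y) * \<Phi> (x - y))"
      by (rule sum.cong[OF refl], rule sum.reindex_bij_betw[OF h])
    finally show ?thesis by (simp add: Qf_def S_def)
  qed
  moreover have "let s = (\<Sum>i<n. \<Sum>j<n. (u \<circ> h) i * cnj ((u \<circ> h) j) * \<Phi> (h i - h j)) in Im s = 0 \<and> Re s \<ge> 0"
    using assms hS unfolding Pclass_def S_def by blast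
  ultimately show ?thesis by (simp add: Let_def)
qed

lemma quad_zero:
  fixes X q :: complex
  assumes q: "Im q = 0" "Re q \<ge> 0"
    and H: "\<And>t::real. Im (of_real t * X + of_real (t^2) * q) = 0 \<and> Re (of_real t * X + of_real (t^2) * q) \<ge> 0"
  shows "X = 0"
proof -
  have "Im X = 0" using H[of 1] q by simp
  define r where "r = Re X"
  define c where "c = Re q"
  have c0: "c \<ge> 0" using q by (simp add: c_def)
  define t where "t = - r / (c + 1)"
  have "t * r + t^2 * c \<ge> 0" using H[of t] q by (simp add: r_def c_def)
  moreover have tr: "r = - t * (c+1)" using c0 by (simp add: t_def field_simps)
  moreover have "t * r + t^2 * c = - (t^2)" by (simp add: tr algebra_simps power2_eq_square)
  ultimately have "t^2 = 0" by (smt (verit) zero_le_power2)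
  then have "t = 0" by simp
  then have "r = 0" using tr by simp
  then show ?thesis using \<open>Im X = 0\<close> by (simp add: complex_eq_iff r_def)
qed

lemma if0_mult: "(if P then a else 0) * (b::complex) = (if P then a * b else 0)" by simp

lemma Pclass_kernel:
  assumes P: "\<Phi> \<in> Pclass N1 N2 N3" and Q0: "Qf N1 N2 N3 \<Phi> u = 0" and x: "x \<in> Sset N1 N2 N3"
  shows "(\<Sum>y\<in>Sset N1 N2 N3. \<Phi> (y - x) * u y) = 0"
proof -
  define v where "v = (\<lambda>z::idx. if z = x then (1::complex) else 0)"
  define Pv where "Pv = Bf N1 N2 N3 \<Phi> u v"
  define Rv where "Rv = Bf N1 N2 N3 \<Phi> v u"
  define q where "q = Qf N1 N2 N3 \<Phi> v"
  have q: "Im q = 0" "Re q \<ge> 0" using Pclass_Qf[OF P] by (auto simp: q_def)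
  have ex: "Qf N1 N2 N3 \<Phi> (\<lambda>z. u z + s * v z) = cnj s * Pv + s * Rv + s * cnj s * q" for s
    using Qf_expand[of N1 N2 N3 \<Phi> u s v] Q0 by (simp add: Pv_def Rv_def q_def)
  have "Pv + Rv = 0"
  proof (rule quad_zero[OF q])
    fix t :: real
    have "Qf N1 N2 N3 \<Phi> (\<lambda>z. u z + of_real t * v z) = of_real t * (Pv + Rv) + of_real (t^2) * q"
      by (simp add: ex algebra_simps power2_eq_square)
    then show "Im (of_real t * (Pv + Rv) + of_real (t^2) * q) = 0 \<and> Re (of_real t * (Pv + Rv) + of_real (t^2) * q) \<ge> 0"
      using Pclass_Qf[OF P, of "\<lambda>z. u z + of_real t * v z"] by simp
  qed
  moreover have "\<i> * (Rv - Pv) = 0"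
  proof (rule quad_zero[OF q])
    fix t :: real
    have "Qf N1 N2 N3 \<Phi> (\<lambda>z. u z + (\<i> * of_real t) * v z) = of_real t * (\<i> * (Rv - Pv)) + of_real (t^2) * q"
      unfolding ex[of "\<i> * of_real t"] by (simp add: algebra_simps power2_eq_square)
    then show "Im (of_real t * (\<i> * (Rv - Pv)) + of_real (t^2) * q) = 0 \<and> Re (of_real t * (\<i> * (Rv - Pv)) + of_real (t^2) * q) \<ge> 0"
      using Pclass_Qf[OF P, of "\<lambda>z. u z + (\<i> * of_real t) * v z"] by simp
  qed
  ultimately have "Pv = 0" by (simp add: algebra_simps)
  moreover have "Pv = (\<Sum>z\<in>Sset N1 N2 N3. u z * \<Phi> (z - x))"
  proof -
    have "(\<Sum>y\<in>Sset N1 N2 N3. u z * cnj (v y) * \<Phi> (z - y)) = u z * \<Phi> (z - x)" for z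
    proof -
      have "(\<Sum>y\<in>Sset N1 N2 N3. u z * cnj (v y) * \<Phi> (z - y)) = (\<Sum>y\<in>Sset N1 N2 N3. if y = x then u z * \<Phi> (z - y) else 0)"
        by (rule sum.cong) (auto simp: v_def)
      also have "\<dots> = u z * \<Phi> (z - x)" using x by (simp add: sum.delta)
      finally show ?thesis .
    qed
    then show ?thesis unfolding Pv_def Bf_def by simp
  qed
  ultimately show ?thesis by (simp add: mult.commute)
qed

lemma vs_fun: "vector_space (\<lambda>(c::complex) (e::idx \<Rightarrow> complex). (\<lambda>x. c * e x))"
  by unfold_locales (simp_all add: fun_eq_iff algebra_simps)

lemma dim1:
  assumes "nuA N1 N2 N3 \<Phi> = 1"
  shows "\<exists>e0\<in>kerA N1 N2 N3 \<Phi>. \<forall>e\<in>kerA N1 N2 N3 \<Phi>. \<exists>k. e = (\<lambda>x. k * e0 x)"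
proof -
  interpret V: vector_space "\<lambda>(c::complex) (e::idx \<Rightarrow> complex). (\<lambda>x. c * e x)" by (rule vs_fun)
  obtain B where B: "B \<subseteq> kerA N1 N2 N3 \<Phi>" "V.independent B" "kerA N1 N2 N3 \<Phi> \<subseteq> V.span B"
    "card B = V.dim (kerA N1 N2 N3 \<Phi>)" by (rule V.basis_exists)
  then have "card B = 1" using assms by (simp add: nuA_def)
  then obtain e0 where e0: "B = {e0}" by (rule card_1_singletonE)
  show ?thesis
  proof (intro bexI ballI)
    show "e0 \<in> kerA N1 N2 N3 \<Phi>" using B e0 by auto
    fix e assume "e \<in> kerA N1 N2 N3 \<Phi>"
    then have "e \<in> V.span {e0}" using B e0 by auto
    then show "\<exists>k. e = (\<lambda>x. k * e0 x)" unfolding V.span_singleton by auto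
  qed
qed

lemma Fpoly_scale: "Fpoly N1 N2 N3 (\<lambda>x. k * e x) a b c = k * Fpoly N1 N2 N3 e a b c"
  by (simp add: Fpoly_alt sum_distrib_left mult.assoc)

lemma Fpoly_restrict: "Fpoly N1 N2 N3 (\<lambda>x. if x \<in> Sset N1 N2 N3 then e x else 0) a b c = Fpoly N1 N2 N3 e a b c"
  unfolding Fpoly_alt by (rule sum.cong) auto

lemma Qf_restrict: "Qf N1 N2 N3 \<Phi> (\<lambda>x. if x \<in> Sset N1 N2 N3 then e x else 0) = Qf N1 N2 N3 \<Phi> e"
  unfolding Qf_def by (intro sum.cong refl) auto

lemma ker_Qf:
  assumes "e \<in> kerA N1 N2 N3 \<Phi>"
  shows "Qf N1 N2 N3 \<Phi> e = 0"
proof -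
  have "Qf N1 N2 N3 \<Phi> e = (\<Sum>y\<in>Sset N1 N2 N3. cnj (e y) * (\<Sum>x\<in>Sset N1 N2 N3. \<Phi> (x - y) * e x))"
    unfolding Qf_def sum_distrib_left by (subst sum.swap) (simp add: mult_ac)
  also have "\<dots> = 0" using assms by (simp add: kerA_def)
  finally show ?thesis .
qed

lemma part:
  fixes r r' :: nat
  assumes P: "\<Phi> \<in> Pclass N1 N2 N3"
    and e0: "e0 \<in> kerA N1 N2 N3 \<Phi>"
    and span: "\<forall>e\<in>kerA N1 N2 N3 \<Phi>. \<exists>k. e = (\<lambda>x. k * e0 x)"
    and fg: "(\<lambda>a b c. C * (cmod (Fpoly N1 N2 N3 e0 a b c))\<^sup>2) =
      (\<lambda>a b c. (\<Sum>j<r. (cmod (Fpoly N1 N2 N3 (q j) a b c))\<^sup>2) + (\<Sum>j<r'. (cmod (Fpoly N1 N2 N3 (p j) a b c))\<^sup>2))"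
    and C: "C > 0"
  shows "\<exists>a\<ge>0. (\<lambda>a b c. \<Sum>j<r. (cmod (Fpoly N1 N2 N3 (q j) a b c))\<^sup>2) = (\<lambda>a' b c. a * (C * (cmod (Fpoly N1 N2 N3 e0 a' b c))\<^sup>2))"
proof -
  define M where "M = Mof N1 N2 N3"
  have "M \<noteq> 0" by (simp add: M_def Mof_def)
  then have M0: "(of_nat M :: complex) ^ 3 \<noteq> 0" by simp
  define L where "L = Lf N1 N2 N3 \<Phi>"
  have "L (\<lambda>a b c. C * (cmod (Fpoly N1 N2 N3 e0 a b c))\<^sup>2) = 0"
    unfolding L_def Lf_scale L_sq ker_Qf[OF e0] by simp
  moreover have "L (\<lambda>a b c. (\<Sum>j<r. (cmod (Fpoly N1 N2 N3 (q j) a b c))\<^sup>2) + (\<Sum>j<r'. (cmod (Fpoly N1 N2 N3 (p j) a b c))\<^sup>2))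
      = of_nat M ^ 3 * ((\<Sum>j<r. Qf N1 N2 N3 \<Phi> (q j)) + (\<Sum>j<r'. Qf N1 N2 N3 \<Phi> (p j)))"
    unfolding L_def Lf_add Lf_sum L_sq M_def by (simp add: sum_distrib_left algebra_simps)
  ultimately have "(\<Sum>j<r. Qf N1 N2 N3 \<Phi> (q j)) + (\<Sum>j<r'. Qf N1 N2 N3 \<Phi> (p j)) = 0"
    using fg M0 by simp
  then have Re0: "(\<Sum>j<r. Re (Qf N1 N2 N3 \<Phi> (q j))) + (\<Sum>j<r'. Re (Qf N1 N2 N3 \<Phi> (p j))) = 0"
    by (metis Re_sum plus_complex.simps(1) zero_complex.simps(1))
  have nn1: "(\<Sum>j<r. Re (Qf N1 N2 N3 \<Phi> (q j))) \<ge> 0" and nn2: "(\<Sum>j<r'. Re (Qf N1 N2 N3 \<Phi> (p j))) \<ge> 0"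
    using Pclass_Qf[OF P] by (auto intro: sum_nonneg)
  have "(\<Sum>j<r. Re (Qf N1 N2 N3 \<Phi> (q j))) = 0" using Re0 nn1 nn2 by linarith
  then have "\<forall>j\<in>{..<r}. Re (Qf N1 N2 N3 \<Phi> (q j)) = 0"
    using sum_nonneg_eq_0_iff[of "{..<r}" "\<lambda>j. Re (Qf N1 N2 N3 \<Phi> (q j))"] Pclass_Qf[OF P] by auto
  then have Q0: "Qf N1 N2 N3 \<Phi> (q j) = 0" if "j < r" for j
    using Pclass_Qf[OF P, of "q j"] that by (simp add: complex_eq_iff)
  have "\<forall>j\<in>{..<r}. \<exists>k. (\<lambda>x. if x \<in> Sset N1 N2 N3 then q j x else 0) = (\<lambda>x. k * e0 x)"
  proof
    fix j assume j: "j \<in> {..<r}"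
    define q' where "q' = (\<lambda>x. if x \<in> Sset N1 N2 N3 then q j x else 0)"
    have "Qf N1 N2 N3 \<Phi> q' = 0" using Q0 j by (simp add: q'_def Qf_restrict)
    then have k: "\<forall>x\<in>Sset N1 N2 N3. (\<Sum>y\<in>Sset N1 N2 N3. \<Phi> (y - x) * q' y) = 0"
      using Pclass_kernel[OF P] by blast
    have "q' \<in> kerA N1 N2 N3 \<Phi>"
      unfolding kerA_def mem_Collect_eq using k by (simp add: q'_def)
    then show "\<exists>k. q' = (\<lambda>x. k * e0 x)" using span by blast
  qed
  then obtain mu where mu: "\<And>j. j < r \<Longrightarrow> (\<lambda>x. if x \<in> Sset N1 N2 N3 then q j x else 0) = (\<lambda>x. mu j * e0 x)"
    by (metis lessThan_iff)
  have sq: "(cmod (Fpoly N1 N2 N3 (q j) a b c))\<^sup>2 = (cmod (mu j))\<^sup>2 * (cmod (Fpoly N1 N2 N3 e0 a b c))\<^sup>2"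
    if "j < r" for j a b c
  proof -
    have "Fpoly N1 N2 N3 (q j) a b c = mu j * Fpoly N1 N2 N3 e0 a b c"
      using Fpoly_restrict[of N1 N2 N3 "q j" a b c] mu[OF that] Fpoly_scale by metis
    then show ?thesis by (simp add: norm_mult power_mult_distrib)
  qed
  define A where "A = (\<Sum>j<r. (cmod (mu j))\<^sup>2) / C"
  show ?thesis
  proof (intro exI conjI)
    show "A \<ge> 0" using C by (simp add: A_def sum_nonneg)
    show "(\<lambda>a b c. \<Sum>j<r. (cmod (Fpoly N1 N2 N3 (q j) a b c))\<^sup>2) = (\<lambda>a' b c. A * (C * (cmod (Fpoly N1 N2 N3 e0 a' b c))\<^sup>2))"
    proof (intro ext)
      fix a b c
      have "(\<Sum>j<r. (cmod (Fpoly N1 N2 N3 (q j) a b c))\<^sup>2) = (\<Sum>j<r. (cmod (mu j))\<^sup>2 * (cmod (Fpoly N1 N2 N3 e0 a b c))\<^sup>2)"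
        by (rule sum.cong[OF refl]) (simp add: sq)
      also have "\<dots> = (\<Sum>j<r. (cmod (mu j))\<^sup>2) * (cmod (Fpoly N1 N2 N3 e0 a b c))\<^sup>2"
        by (simp add: sum_distrib_right)
      also have "\<dots> = A * (C * (cmod (Fpoly N1 N2 N3 e0 a b c))\<^sup>2)"
        using C by (simp add: A_def)
      finally show "(\<Sum>j<r. (cmod (Fpoly N1 N2 N3 (q j) a b c))\<^sup>2) = A * (C * (cmod (Fpoly N1 N2 N3 e0 a b c))\<^sup>2)" .
    qed
  qed
qed

theorem corollary2:
  fixes N1 N2 N3 :: nat and \<Phi> :: "idx \<Rightarrow> complex" and f :: "real \<Rightarrow> real \<Rightarrow> real \<Rightarrow> real"
  assumes "\<Phi> \<in> Pclass N1 N2 N3"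
    and "nuA N1 N2 N3 \<Phi> = 1"
    and "f \<in> DA N1 N2 N3 \<Phi>"
  shows "extremal (Qclass N1 N2 N3) f"
proof -
  note P = assms(1)
  obtain e0 where e0: "e0 \<in> kerA N1 N2 N3 \<Phi>" and span: "\<forall>e\<in>kerA N1 N2 N3 \<Phi>. \<exists>k. e = (\<lambda>x. k * e0 x)"
    using dim1[OF assms(2)] by blast
  obtain n :: nat and c e where n: "0 < n" and c0: "\<forall>i<n. 0 \<le> c i" and c1: "(\<Sum>i<n. c i) = 1"
    and ek: "\<forall>i<n. e i \<in> kerA N1 N2 N3 \<Phi> \<and> e i \<noteq> 0"
    and f: "f = (\<lambda>\<alpha> \<beta> \<gamma>. \<Sum>i<n. c i * (cmod (Fpoly N1 N2 N3 (e i) \<alpha> \<beta> \<gamma>))\<^sup>2)"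
    using assms(3) unfolding DA_def mem_Collect_eq by blast
  have "\<forall>i\<in>{..<n}. \<exists>k. e i = (\<lambda>x. k * e0 x)" using ek span by blast
  then obtain lam where lam: "\<And>i. i < n \<Longrightarrow> e i = (\<lambda>x. lam i * e0 x)" by (metis lessThan_iff)
  define F0 where "F0 = (\<lambda>\<alpha> \<beta> \<gamma>. (cmod (Fpoly N1 N2 N3 e0 \<alpha> \<beta> \<gamma>))\<^sup>2)"
  define C where "C = (\<Sum>i<n. c i * (cmod (lam i))\<^sup>2)"
  have sqi: "(cmod (Fpoly N1 N2 N3 (e i) a b d))\<^sup>2 = (cmod (lam i))\<^sup>2 * F0 a b d" if "i < n" for i a b d
    using lam[OF that] by (simp add: F0_def Fpoly_scale norm_mult power_mult_distrib)
  have fC: "f = (\<lambda>a b d. C * (cmod (Fpoly N1 N2 N3 e0 a b d))\<^sup>2)"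
  proof (intro ext)
    fix a b d
    have "f a b d = (\<Sum>i<n. c i * ((cmod (lam i))\<^sup>2 * F0 a b d))"
      unfolding f by (rule sum.cong[OF refl]) (simp add: sqi)
    also have "\<dots> = C * F0 a b d" by (simp add: C_def sum_distrib_right mult.assoc)
    finally show "f a b d = C * (cmod (Fpoly N1 N2 N3 e0 a b d))\<^sup>2" by (simp add: F0_def)
  qed
  have "C > 0"
  proof -
    have "\<exists>i0<n. c i0 > 0"
    proof (rule ccontr)
      assume "\<not> (\<exists>i0<n. c i0 > 0)"
      then have "\<forall>i<n. c i = 0" using c0 by force
      then show False using c1 by simp
    qed
    then obtain i0 where i0: "i0 < n" "c i0 > 0" by blast
    have "lam i0 \<noteq> 0"
    proof
      assume "lam i0 = 0"
      then have "e i0 = 0" using lam[OF i0(1)] by (simp add: fun_eq_iff)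
      then show False using ek i0 by blast
    qed
    then have pos: "c i0 * (cmod (lam i0))\<^sup>2 > 0" using i0 by simp
    have "c i0 * (cmod (lam i0))\<^sup>2 \<le> C"
      unfolding C_def by (rule member_le_sum) (use i0 c0 in auto)
    then show ?thesis using pos by linarith
  qed
  have fQ: "f \<in> Qclass N1 N2 N3"
    unfolding Qclass_def mem_Collect_eq
  proof (intro exI)
    show "f = (\<lambda>\<alpha> \<beta> \<gamma>. \<Sum>j<n. (cmod (Fpoly N1 N2 N3 (\<lambda>x. complex_of_real (sqrt (c j)) * e j x) \<alpha> \<beta> \<gamma>))\<^sup>2)"
      unfolding f Fpoly_scale using c0
      by (intro ext sum.cong refl) (simp add: norm_mult power_mult_distrib)
  qed
  show ?thesis
    unfolding extremal_def
  proof (intro conjI allI impI fQ)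
    fix g h assume gQ: "g \<in> Qclass N1 N2 N3" and hQ: "h \<in> Qclass N1 N2 N3"
      and fgh: "f = (\<lambda>\<alpha> \<beta> \<gamma>. g \<alpha> \<beta> \<gamma> + h \<alpha> \<beta> \<gamma>)"
    obtain r q where g: "g = (\<lambda>\<alpha> \<beta> \<gamma>. \<Sum>j<(r::nat). (cmod (Fpoly N1 N2 N3 (q j) \<alpha> \<beta> \<gamma>))\<^sup>2)"
      using gQ unfolding Qclass_def mem_Collect_eq by blast
    obtain r' p where h: "h = (\<lambda>\<alpha> \<beta> \<gamma>. \<Sum>j<(r'::nat). (cmod (Fpoly N1 N2 N3 (p j) \<alpha> \<beta> \<gamma>))\<^sup>2)"
      using hQ unfolding Qclass_def mem_Collect_eq by blast
    have e1: "(\<lambda>a b d. C * (cmod (Fpoly N1 N2 N3 e0 a b d))\<^sup>2) =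
      (\<lambda>a b d. (\<Sum>j<r. (cmod (Fpoly N1 N2 N3 (q j) a b d))\<^sup>2) + (\<Sum>j<r'. (cmod (Fpoly N1 N2 N3 (p j) a b d))\<^sup>2))"
      using fgh fC g h by simp
    have e2: "(\<lambda>a b d. C * (cmod (Fpoly N1 N2 N3 e0 a b d))\<^sup>2) =
      (\<lambda>a b d. (\<Sum>j<r'. (cmod (Fpoly N1 N2 N3 (p j) a b d))\<^sup>2) + (\<Sum>j<r. (cmod (Fpoly N1 N2 N3 (q j) a b d))\<^sup>2))"
      using e1 by (simp add: add.commute)
    show "\<exists>a\<ge>0. g = (\<lambda>\<alpha> \<beta> \<gamma>. a * f \<alpha> \<beta> \<gamma>)"
      using part[OF P e0 span e1 \<open>C > 0\<close>] unfolding g fC by simp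
    show "\<exists>b\<ge>0. h = (\<lambda>\<alpha> \<beta> \<gamma>. b * f \<alpha> \<beta> \<gamma>)"
      using part[OF P e0 span e2 \<open>C > 0\<close>] unfolding h fC by simp
  qed
qed

end
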